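(* Let $F=\breve F(\alpha_1,\dots,\alpha_t)$ be a fence. (1) If $x,y\in\breve S_i$ for some $i\in[t]$, then $\chi_x-\chi_y\equiv 0$. (2) If $\alpha_i=2$ for all $i\in[t]$, then $\chi\equiv t/2$, where $\chi=\sum_{q\in F}\chi_q$.
   Context: Fences: let $\alpha=(\alpha_1,\dots,\alpha_t)$ be positive integers with $t\ge2$ and $\alpha_1,\alpha_t\ge2$. Put $a_0=0$, $a_i=\alpha_1+\dots+\alpha_i$, $n=a_t-1$. The fence $\breve F(\alpha)$ is the poset on $\{x_1,\dots,x_n\}$ whose cover relations are: for $1\le j\le n-1$ with $a_{i-1}\le j<a_i$, $x_j\lessdot x_{j+1}$ if $i$ is odd and $x_j\gtrdot x_{j+1}$ if $i$ is even. Segments: $S_1=\{x_j:1\le j\le a_1\}$, $S_i=\{x_j:a_{i-1}\le j\le a_i\}$ for $2\le i\le t-1$, $S_t=\{x_j:a_{t-1}\le j\le n\}$. Shared elements are $x_{a_i}$, $i\in[t-1]$; $\breve S_i$ is the set of non-shared elements of $S_i$. $\mathcal J(F)$ is the set of order ideals. For $q\in F$, $I\in\mathcal J(F)$: $\chi_q(I)=1$ if $q\in\max(I)$, else $0$; $T_q(I)=1$ if $q\in\min(F\setminus I)$, $-1$ if $q\in\max(I)$, $0$ otherwise. For functions $f,g:\mathcal J(F)\to\mathbb R$, $f\equiv g$ means $f-g=\sum_{q\in F}c_qT_q$ for some real constants $c_q$; a real number $c$ also denotes the constant function $c$. *)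

theory Defs
  imports Complex_Main
begin

text \<open>A composition alpha = (alpha_1,...,alpha_t) is a list; alpha_i = alpha ! (i-1).
  Fence elements x_1..x_n are represented by the naturals 1..n.\<close>

definition fence_ok :: "nat list \<Rightarrow> bool" where
  "fence_ok alpha \<longleftrightarrow> length alpha \<ge> 2 \<and> (\<forall>k\<in>set alpha. k > 0)
     \<and> hd alpha \<ge> 2 \<and> last alpha \<ge> 2"

definition apart :: "nat list \<Rightarrow> nat \<Rightarrow> nat" where
  "apart alpha i = sum_list (take i alpha)"

definition fsize :: "nat list \<Rightarrow> nat" where
  "fsize alpha = apart alpha (length alpha) - 1"

definition felems :: "nat list \<Rightarrow> nat set" where
  "felems alpha = {1..fsize alpha}"

text \<open>Cover relation: cover alpha u v means x_u is covered by x_v.\<close>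
definition cover :: "nat list \<Rightarrow> nat \<Rightarrow> nat \<Rightarrow> bool" where
  "cover alpha u v \<longleftrightarrow>
     (\<exists>j i. 1 \<le> j \<and> j \<le> fsize alpha - 1 \<and> 1 \<le> i \<and> i \<le> length alpha
        \<and> apart alpha (i-1) \<le> j \<and> j < apart alpha i
        \<and> (if odd i then u = j \<and> v = j + 1 else u = j + 1 \<and> v = j))"

definition fle :: "nat list \<Rightarrow> nat \<Rightarrow> nat \<Rightarrow> bool" where
  "fle alpha = (cover alpha)\<^sup>*\<^sup>*"

definition fless :: "nat list \<Rightarrow> nat \<Rightarrow> nat \<Rightarrow> bool" where
  "fless alpha u v \<longleftrightarrow> fle alpha u v \<and> u \<noteq> v"

definition ideals :: "nat list \<Rightarrow> nat set set" where
  "ideals alpha = {I. I \<subseteq> felems alpha \<and>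
      (\<forall>u v. v \<in> I \<longrightarrow> u \<in> felems alpha \<longrightarrow> fle alpha u v \<longrightarrow> u \<in> I)}"

definition maxs :: "nat list \<Rightarrow> nat set \<Rightarrow> nat set" where
  "maxs alpha A = {q \<in> A. \<not> (\<exists>r\<in>A. fless alpha q r)}"

definition mins :: "nat list \<Rightarrow> nat set \<Rightarrow> nat set" where
  "mins alpha A = {q \<in> A. \<not> (\<exists>r\<in>A. fless alpha r q)}"

definition chi :: "nat list \<Rightarrow> nat \<Rightarrow> nat set \<Rightarrow> real" where
  "chi alpha q I = (if q \<in> maxs alpha I then 1 else 0)"

definition toggle :: "nat list \<Rightarrow> nat \<Rightarrow> nat set \<Rightarrow> real" where
  "toggle alpha q I = (if q \<in> mins alpha (felems alpha - I) then 1
                       else if q \<in> maxs alpha I then -1 else 0)"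

definition tequiv :: "nat list \<Rightarrow> (nat set \<Rightarrow> real) \<Rightarrow> (nat set \<Rightarrow> real) \<Rightarrow> bool" where
  "tequiv alpha f g \<longleftrightarrow> (\<exists>c :: nat \<Rightarrow> real. \<forall>I\<in>ideals alpha.
      f I - g I = (\<Sum>q\<in>felems alpha. c q * toggle alpha q I))"

definition segment :: "nat list \<Rightarrow> nat \<Rightarrow> nat set" where
  "segment alpha i =
     (if i = 1 then {1..apart alpha 1}
      else if i = length alpha then {apart alpha (length alpha - 1)..fsize alpha}
      else {apart alpha (i-1)..apart alpha i})"

definition shared :: "nat list \<Rightarrow> nat set" where
  "shared alpha = apart alpha ` {1..length alpha - 1}"

definition bsegment :: "nat list \<Rightarrow> nat \<Rightarrow> nat set" where
  "bsegment alpha i = segment alpha i - shared alpha"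

end

theory Submission
  imports Defs
begin


lemma cover_felems:
  assumes "cover alpha u v" shows "u \<in> felems alpha" "v \<in> felems alpha" "u \<noteq> v"
  using assms unfolding cover_def felems_def by (auto split: if_splits)

lemma ideal_down:
  assumes "I \<in> ideals alpha" "v \<in> I" "fle alpha u v" "u \<in> felems alpha" shows "u \<in> I"
  using assms unfolding ideals_def by blast

lemma ideal_sub: "I \<in> ideals alpha \<Longrightarrow> I \<subseteq> felems alpha"
  unfolding ideals_def by blast

lemma max_iff:
  assumes I: "I \<in> ideals alpha"
  shows "q \<in> maxs alpha I \<longleftrightarrow> q \<in> I \<and> (\<forall>v. cover alpha q v \<longrightarrow> v \<notin> I)"
proof
  assume q: "q \<in> maxs alpha I"
  show "q \<in> I \<and> (\<forall>v. cover alpha q v \<longrightarrow> v \<notin> I)"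
  proof (intro conjI allI impI)
    show "q \<in> I" using q unfolding maxs_def by auto
    fix v assume c: "cover alpha q v"
    then have "fless alpha q v" using cover_felems[OF c] unfolding fless_def fle_def by auto
    then show "v \<notin> I" using q unfolding maxs_def by auto
  qed
next
  assume h: "q \<in> I \<and> (\<forall>v. cover alpha q v \<longrightarrow> v \<notin> I)"
  show "q \<in> maxs alpha I"
  proof (unfold maxs_def, safe)
    show "q \<in> I" using h by auto
    fix r assume r: "r \<in> I" "fless alpha q r"
    then have "(cover alpha)\<^sup>*\<^sup>* q r" "q \<noteq> r" unfolding fless_def fle_def by auto
    then obtain v where v: "cover alpha q v" "(cover alpha)\<^sup>*\<^sup>* v r"
      by (metis converse_rtranclpE)
    have "v \<in> I" using ideal_down[OF I r(1)] v cover_felems[OF v(1)] unfolding fle_def by auto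
    then show False using h v by auto
  qed
qed

lemma min_iff:
  assumes I: "I \<in> ideals alpha"
  shows "q \<in> mins alpha (felems alpha - I) \<longleftrightarrow>
     q \<in> felems alpha \<and> q \<notin> I \<and> (\<forall>u. cover alpha u q \<longrightarrow> u \<in> I)"
proof
  assume q: "q \<in> mins alpha (felems alpha - I)"
  show "q \<in> felems alpha \<and> q \<notin> I \<and> (\<forall>u. cover alpha u q \<longrightarrow> u \<in> I)"
  proof (intro conjI allI impI)
    show "q \<in> felems alpha" "q \<notin> I" using q unfolding mins_def by auto
    fix u assume c: "cover alpha u q"
    show "u \<in> I"
    proof (rule ccontr)
      assume "u \<notin> I"
      moreover have "fless alpha u q" using cover_felems[OF c] c unfolding fless_def fle_def by auto
      ultimately show False using q cover_felems[OF c] unfolding mins_def by auto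
    qed
  qed
next
  assume h: "q \<in> felems alpha \<and> q \<notin> I \<and> (\<forall>u. cover alpha u q \<longrightarrow> u \<in> I)"
  show "q \<in> mins alpha (felems alpha - I)"
  proof (unfold mins_def, safe)
    show "q \<in> felems alpha" using h by auto
    show "q \<in> I \<Longrightarrow> False" using h by auto
    fix r assume r: "r \<in> felems alpha" "r \<notin> I" "fless alpha r q"
    then have "(cover alpha)\<^sup>*\<^sup>* r q" "r \<noteq> q" unfolding fless_def fle_def by auto
    then obtain u where u: "(cover alpha)\<^sup>*\<^sup>* r u" "cover alpha u q"
      by (metis rtranclp.cases)
    have "u \<in> I" using h u by auto
    then have "r \<in> I" using ideal_down[OF I _ _ r(1)] u unfolding fle_def by auto
    then show False using r by auto
  qed
qed

definition mu :: "nat list \<Rightarrow> nat \<Rightarrow> nat set \<Rightarrow> real" where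
  "mu alpha q I = (if q \<in> mins alpha (felems alpha - I) then 1 else 0)"

lemma toggle_eq: "toggle alpha q I = mu alpha q I - chi alpha q I"
  unfolding toggle_def mu_def chi_def maxs_def mins_def by auto

lemma chi_iff: "I \<in> ideals alpha \<Longrightarrow>
   chi alpha q I = (if q \<in> I \<and> (\<forall>v. cover alpha q v \<longrightarrow> v \<notin> I) then 1 else 0)"
  unfolding chi_def by (simp only: max_iff)

lemma mu_iff: "I \<in> ideals alpha \<Longrightarrow>
   mu alpha q I = (if q \<in> felems alpha \<and> q \<notin> I \<and> (\<forall>u. cover alpha u q \<longrightarrow> u \<in> I) then 1 else 0)"
  unfolding mu_def by (simp only: min_iff)

lemma cover_ideal: "I \<in> ideals alpha \<Longrightarrow> cover alpha u v \<Longrightarrow> v \<in> I \<Longrightarrow> u \<in> I"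
  using ideal_down[of I alpha v u] cover_felems[of alpha u v] unfolding fle_def by blast

lemma chain_step:
  assumes "cover alpha u v" "\<And>w. cover alpha u w \<Longrightarrow> w = v" "\<And>w. cover alpha w v \<Longrightarrow> w = u"
    and I: "I \<in> ideals alpha"
  shows "chi alpha u I - chi alpha v I = toggle alpha v I"
proof -
  have u: "(\<forall>w. cover alpha u w \<longrightarrow> w \<notin> I) \<longleftrightarrow> v \<notin> I" using assms(1,2) by blast
  have v: "(\<forall>w. cover alpha w v \<longrightarrow> w \<in> I) \<longleftrightarrow> u \<in> I" using assms(1,3) by blast
  have "v \<in> felems alpha" using cover_felems[OF assms(1)] by simp
  then show ?thesis unfolding toggle_eq chi_iff[OF I] mu_iff[OF I] u v
    using cover_ideal[OF I assms(1)] by auto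
qed

lemma tequiv_add:
  assumes "tequiv alpha f (\<lambda>_. 0)" "tequiv alpha g (\<lambda>_. 0)"
  shows "tequiv alpha (\<lambda>I. f I + g I) (\<lambda>_. 0)"
proof -
  obtain c where c: "\<forall>I\<in>ideals alpha. f I - 0 = (\<Sum>q\<in>felems alpha. c q * toggle alpha q I)"
    using assms(1) unfolding tequiv_def by blast
  obtain d where d: "\<forall>I\<in>ideals alpha. g I - 0 = (\<Sum>q\<in>felems alpha. d q * toggle alpha q I)"
    using assms(2) unfolding tequiv_def by blast
  show ?thesis unfolding tequiv_def
    by (rule exI[of _ "\<lambda>q. c q + d q"]) (use c d in \<open>simp add: distrib_right sum.distrib\<close>)
qed

lemma tequiv_cmult:
  assumes "tequiv alpha f (\<lambda>_. 0)"
  shows "tequiv alpha (\<lambda>I. a * f I) (\<lambda>_. 0)"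
proof -
  obtain c where c: "\<forall>I\<in>ideals alpha. f I - 0 = (\<Sum>q\<in>felems alpha. c q * toggle alpha q I)"
    using assms(1) unfolding tequiv_def by blast
  show ?thesis unfolding tequiv_def
    by (rule exI[of _ "\<lambda>q. a * c q"]) (use c in \<open>simp add: sum_distrib_left mult.assoc\<close>)
qed

lemma tequiv_toggle:
  assumes "q \<in> felems alpha" "\<And>I. I \<in> ideals alpha \<Longrightarrow> f I = a * toggle alpha q I"
  shows "tequiv alpha f (\<lambda>_. 0)"
  unfolding tequiv_def
proof (rule exI[of _ "\<lambda>r. if r = q then a else 0"], intro ballI)
  fix I assume I: "I \<in> ideals alpha"
  have "(\<Sum>r\<in>felems alpha. (if r = q then a else 0) * toggle alpha r I)
      = (\<Sum>r\<in>felems alpha. if r = q then a * toggle alpha r I else 0)"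
    by (rule sum.cong) auto
  also have "\<dots> = a * toggle alpha q I" using assms(1) by (simp add: felems_def)
  finally show "f I - 0 = (\<Sum>r\<in>felems alpha. (if r = q then a else 0) * toggle alpha r I)"
    using assms(2)[OF I] by linarith
qed

lemma tequiv_zero:
  assumes "\<And>I. I \<in> ideals alpha \<Longrightarrow> f I = 0"
  shows "tequiv alpha f (\<lambda>_. 0)"
  unfolding tequiv_def by (rule exI[of _ "\<lambda>r. 0"]) (simp add: assms)



lemma apart_0[simp]: "apart alpha 0 = 0" unfolding apart_def by simp

lemma apart_mono: "i \<le> i' \<Longrightarrow> apart alpha i \<le> apart alpha i'"
proof -
  assume "i \<le> i'"
  then obtain d where "i' = i + d" using le_Suc_ex by blast
  then show ?thesis unfolding apart_def by (simp add: take_add)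
qed

lemma apart_Suc: "i < length alpha \<Longrightarrow> apart alpha (Suc i) = apart alpha i + alpha ! i"
  unfolding apart_def by (simp add: take_Suc_conv_app_nth)

lemma seg_unique:
  assumes "1 \<le> i" "1 \<le> i'" "apart alpha (i-1) \<le> j" "j < apart alpha i"
    "apart alpha (i'-1) \<le> j" "j < apart alpha i'"
  shows "i = i'"
proof (rule ccontr)
  assume "i \<noteq> i'"
  then consider "i < i'" | "i' < i" by linarith
  then show False
  proof cases
    case 1 then have "apart alpha i \<le> apart alpha (i'-1)" by (intro apart_mono) simp
    then show False using assms by linarith
  next
    case 2 then have "apart alpha i' \<le> apart alpha (i-1)" by (intro apart_mono) simp
    then show False using assms by linarith
  qed
qed

lemma apart_1: "fence_ok alpha \<Longrightarrow> apart alpha 1 = hd alpha"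
  unfolding fence_ok_def apart_def by (cases alpha) auto

lemma apart_t_ge: "fence_ok alpha \<Longrightarrow> apart alpha (length alpha) \<ge> 2"
proof -
  assume f: "fence_ok alpha"
  have "apart alpha 1 \<le> apart alpha (length alpha)"
    using f unfolding fence_ok_def by (intro apart_mono) simp
  then show ?thesis using apart_1[OF f] f unfolding fence_ok_def by simp
qed

lemma fsize_eq: "fence_ok alpha \<Longrightarrow> Suc (fsize alpha) = apart alpha (length alpha)"
  using apart_t_ge unfolding fsize_def by fastforce

lemma bseg_bounds:
  assumes f: "fence_ok alpha" and i: "1 \<le> i" "i \<le> length alpha"
    and j: "j \<in> bsegment alpha i"
  shows "apart alpha (i-1) < j" "j < apart alpha i" "1 \<le> j" "j \<le> fsize alpha"
proof -
  have t2: "length alpha \<ge> 2" using f unfolding fence_ok_def by simp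
  have sh: "\<And>m. 1 \<le> m \<Longrightarrow> m \<le> length alpha - 1 \<Longrightarrow> j \<noteq> apart alpha m"
    using j unfolding bsegment_def shared_def by auto
  have n: "Suc (fsize alpha) = apart alpha (length alpha)" using fsize_eq[OF f] .
  have "apart alpha (i-1) < j \<and> j < apart alpha i \<and> 1 \<le> j \<and> j \<le> fsize alpha"
  proof (cases "i = 1")
    case True
    then have "j \<in> {1..apart alpha 1}" "j \<noteq> apart alpha 1"
      using j sh[of 1] t2 unfolding bsegment_def segment_def by auto
    moreover have "apart alpha 1 \<le> apart alpha (length alpha)" using t2 by (intro apart_mono) simp
    ultimately show ?thesis using True n by auto
  next
    case False
    show ?thesis
    proof (cases "i = length alpha")
      case True
      then have "j \<in> {apart alpha (i-1)..fsize alpha}" "j \<noteq> apart alpha (i-1)"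
        using j sh[of "i-1"] False i unfolding bsegment_def segment_def by auto
      moreover have "1 \<le> apart alpha 1" using apart_1[OF f] f unfolding fence_ok_def by simp
      moreover have "apart alpha 1 \<le> apart alpha (i-1)" using False i by (intro apart_mono) simp
      ultimately show ?thesis using True n by auto
    next
      case False2: False
      then have "j \<in> {apart alpha (i-1)..apart alpha i}" "j \<noteq> apart alpha (i-1)" "j \<noteq> apart alpha i"
        using j sh[of "i-1"] sh[of i] False i unfolding bsegment_def segment_def by auto
      moreover have "1 \<le> apart alpha 1" using apart_1[OF f] f unfolding fence_ok_def by simp
      moreover have "apart alpha 1 \<le> apart alpha (i-1)" using False i by (intro apart_mono) simp
      moreover have "apart alpha i \<le> apart alpha (length alpha)" using i by (intro apart_mono) simp
      ultimately show ?thesis using n by auto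
    qed
  qed
  then show "apart alpha (i-1) < j" "j < apart alpha i" "1 \<le> j" "j \<le> fsize alpha" by auto
qed

lemma bseg_between:
  assumes f: "fence_ok alpha" and i: "1 \<le> i" "i \<le> length alpha"
    and x: "x \<in> bsegment alpha i" and y: "y \<in> bsegment alpha i" and z: "x \<le> z" "z \<le> y"
  shows "z \<in> bsegment alpha i"
proof -
  have t2: "length alpha \<ge> 2" using f unfolding fence_ok_def by simp
  have zs: "z \<in> segment alpha i" using x y z unfolding bsegment_def segment_def
    by (auto split: if_splits)
  have "z \<notin> shared alpha"
  proof
    assume "z \<in> shared alpha"
    then obtain m where m: "1 \<le> m" "m \<le> length alpha - 1" "z = apart alpha m"
      unfolding shared_def by auto
    have xs: "x \<notin> shared alpha" "y \<notin> shared alpha" using x y unfolding bsegment_def by auto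
    show False
    proof (cases "m \<le> i - 1")
      case True
      then have "apart alpha m \<le> apart alpha (i-1)" by (rule apart_mono)
      then have "z \<le> x" using bseg_bounds(1)[OF f i x] m by linarith
      then have "x = z" using z by simp
      then show False using xs \<open>z \<in> shared alpha\<close> by simp
    next
      case False
      then have "apart alpha i \<le> apart alpha m" by (intro apart_mono) simp
      then have "y \<le> z" using bseg_bounds(2)[OF f i y] m by linarith
      then have "y = z" using z by simp
      then show False using xs \<open>z \<in> shared alpha\<close> by simp
    qed
  qed
  then show ?thesis using zs unfolding bsegment_def by simp
qed

lemma cover_at:
  assumes "1 \<le> i" "i \<le> length alpha" "apart alpha (i-1) \<le> k" "k < apart alpha i"
     "1 \<le> k" "k + 1 \<le> fsize alpha"
  shows "odd i \<Longrightarrow> cover alpha k (k+1)" "even i \<Longrightarrow> cover alpha (k+1) k"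
  unfolding cover_def by (rule exI[of _ k], rule exI[of _ i], use assms in auto)+

lemma cover_E:
  assumes "cover alpha u v"
  obtains k i where "1 \<le> k" "k \<le> fsize alpha - 1" "1 \<le> i" "i \<le> length alpha"
    "apart alpha (i-1) \<le> k" "k < apart alpha i"
    "odd i \<and> u = k \<and> v = k + 1 \<or> even i \<and> u = k + 1 \<and> v = k"
  using assms unfolding cover_def by (auto split: if_splits)

lemma part1_step:
  assumes f: "fence_ok alpha" and i: "1 \<le> i" "i \<le> length alpha"
    and j: "j \<in> bsegment alpha i" and j1: "Suc j \<in> bsegment alpha i"
  shows "tequiv alpha (\<lambda>I. chi alpha j I - chi alpha (Suc j) I) (\<lambda>_. 0)"
proof -
  note b0 = bseg_bounds[OF f i j] and b1 = bseg_bounds[OF f i j1]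
  have inseg: "\<And>k i'. 1 \<le> i' \<Longrightarrow> apart alpha (i'-1) \<le> k \<Longrightarrow> k < apart alpha i' \<Longrightarrow>
      j - 1 \<le> k \<Longrightarrow> k \<le> j + 1 \<Longrightarrow> i' = i"
  proof -
    fix k i' assume h: "1 \<le> i'" "apart alpha (i'-1) \<le> k" "k < apart alpha i'" "j - 1 \<le> k" "k \<le> j + 1"
    have "apart alpha (i-1) \<le> k" "k < apart alpha i" using b0(1) b1(2) h(4,5) by linarith+
    then show "i' = i" using seg_unique[OF i(1) h(1) _ _ h(2,3)] by blast
  qed
  show ?thesis
  proof (cases "odd i")
    case True
    have c: "cover alpha j (Suc j)" using cover_at(1)[OF i, of j] b0 b1 True by simp
    have u: "w = Suc j" if "cover alpha j w" for w
    proof -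
      from cover_E[OF that] obtain k i' where "1 \<le> i'" "apart alpha (i'-1) \<le> k" "k < apart alpha i'"
        "odd i' \<and> j = k \<and> w = k + 1 \<or> even i' \<and> j = k + 1 \<and> w = k" by blast
      then show ?thesis using inseg[of i' k] True by auto
    qed
    have l: "w = j" if "cover alpha w (Suc j)" for w
    proof -
      from cover_E[OF that] obtain k i' where "1 \<le> i'" "apart alpha (i'-1) \<le> k" "k < apart alpha i'"
        "odd i' \<and> w = k \<and> Suc j = k + 1 \<or> even i' \<and> w = k + 1 \<and> Suc j = k" by blast
      then show ?thesis using inseg[of i' k] True by auto
    qed
    show ?thesis
      by (rule tequiv_toggle[where a=1 and q="Suc j"])
        (use b1 chain_step[OF c u l] in \<open>auto simp: felems_def\<close>)
  next
    case False
    have c: "cover alpha (Suc j) j" using cover_at(2)[OF i, of j] b0 b1 False by simp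
    have u: "w = j" if "cover alpha (Suc j) w" for w
    proof -
      from cover_E[OF that] obtain k i' where "1 \<le> i'" "apart alpha (i'-1) \<le> k" "k < apart alpha i'"
        "odd i' \<and> Suc j = k \<and> w = k + 1 \<or> even i' \<and> Suc j = k + 1 \<and> w = k" by blast
      then show ?thesis using inseg[of i' k] False by auto
    qed
    have l: "w = Suc j" if "cover alpha w j" for w
    proof -
      from cover_E[OF that] obtain k i' where "1 \<le> i'" "apart alpha (i'-1) \<le> k" "k < apart alpha i'"
        "odd i' \<and> w = k \<and> j = k + 1 \<or> even i' \<and> w = k + 1 \<and> j = k" by blast
      then show ?thesis using inseg[of i' k] False by auto
    qed
    show ?thesis
    proof (rule tequiv_toggle[where a="-1" and q="j"])
      show "j \<in> felems alpha" using b0 by (simp add: felems_def)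
      fix I assume "I \<in> ideals alpha"
      then show "chi alpha j I - chi alpha (Suc j) I = -1 * toggle alpha j I"
        using chain_step[OF c u l] by force
    qed
  qed
qed

lemma part1_le:
  assumes f: "fence_ok alpha" and i: "1 \<le> i" "i \<le> length alpha"
    and x: "x \<in> bsegment alpha i"
  shows "x + d \<in> bsegment alpha i \<Longrightarrow> tequiv alpha (\<lambda>I. chi alpha x I - chi alpha (x + d) I) (\<lambda>_. 0)"
proof (induction d)
  case 0
  then show ?case by (intro tequiv_zero) simp
next
  case (Suc d)
  have m: "x + d \<in> bsegment alpha i" using bseg_between[OF f i x Suc.prems] by simp
  have "tequiv alpha (\<lambda>I. (chi alpha x I - chi alpha (x + d) I) + (chi alpha (x+d) I - chi alpha (Suc (x + d)) I)) (\<lambda>_. 0)"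
    using tequiv_add[OF Suc.IH[OF m] part1_step[OF f i m]] Suc.prems by simp
  then show ?case by simp
qed

lemma part1:
  assumes f: "fence_ok alpha" and i: "1 \<le> i" "i \<le> length alpha"
    and x: "x \<in> bsegment alpha i" and y: "y \<in> bsegment alpha i"
  shows "tequiv alpha (\<lambda>I. chi alpha x I - chi alpha y I) (\<lambda>_. 0)"
proof (cases "x \<le> y")
  case True
  then show ?thesis using part1_le[OF f i x, of "y - x"] y by simp
next
  case False
  then have "tequiv alpha (\<lambda>I. chi alpha y I - chi alpha x I) (\<lambda>_. 0)"
    using part1_le[OF f i y, of "x - y"] x by simp
  from tequiv_cmult[OF this, of "-1"] show ?thesis by simp
qed



lemma sum_pairs: fixes t :: nat and f :: "nat \<Rightarrow> real" shows "(\<Sum>q\<in>{1..2*t}. f q) = (\<Sum>k\<in>{1..t}. (f (2*k-1) + f (2*k)) :: real)"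
proof (induction t)
  case 0 then show ?case by simp
next
  case (Suc t)
  have "{1..2 * Suc t} = insert (2*t+2) (insert (2*t+1) {1..2*t})" by auto
  then have "(\<Sum>q\<in>{1..2*Suc t}. f q) = f (2*t+2) + f (2*t+1) + (\<Sum>q\<in>{1..2*t}. f q)" by simp
  then show ?case using Suc by (simp add: add.commute)
qed

lemma sum_tele: fixes t :: nat shows "(\<Sum>k\<in>{1..t}. (h k - h (k - 1))) = (h t - h 0 :: real)"
  by (induction t) (auto simp: add.commute)

lemma rep_apart: "apart (replicate t 2) i = 2 * min i t"
  unfolding apart_def by (simp add: sum_list_replicate)

lemma rep_fsize: "fsize (replicate t 2) = 2*t - 1"
  unfolding fsize_def rep_apart by simp

lemma odd_div: "odd (j div 2 + 1) \<longleftrightarrow> j mod 4 < (2::nat)" by presburger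

lemma cover2:
  "cover (replicate t 2) u v \<longleftrightarrow>
    (1 \<le> u \<and> u + 2 \<le> 2*t \<and> u mod 4 < 2 \<and> v = u+1) \<or> (1 \<le> v \<and> v+2 \<le> 2*t \<and> 2 \<le> v mod 4 \<and> u = v+1)"
proof
  assume "cover (replicate t 2) u v"
  then obtain k i where h: "1 \<le> k" "k \<le> 2*t - 2" "1 \<le> i" "i \<le> t"
    "2*(i-1) \<le> k" "k < 2*i"
    "odd i \<and> u = k \<and> v = k + 1 \<or> even i \<and> u = k + 1 \<and> v = k"
    unfolding cover_def rep_apart rep_fsize by (auto split: if_splits)
  then have "i = k div 2 + 1" by linarith
  then have "odd i \<longleftrightarrow> k mod 4 < 2" using odd_div by simp
  then show "(1 \<le> u \<and> u + 2 \<le> 2*t \<and> u mod 4 < 2 \<and> v = u+1) \<or> (1 \<le> v \<and> v+2 \<le> 2*t \<and> 2 \<le> v mod 4 \<and> u = v+1)"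
    using h by auto
next
  assume h: "(1 \<le> u \<and> u + 2 \<le> 2*t \<and> u mod 4 < 2 \<and> v = u+1) \<or> (1 \<le> v \<and> v+2 \<le> 2*t \<and> 2 \<le> v mod 4 \<and> u = v+1)"
  obtain k where k: "1 \<le> k" "k + 2 \<le> 2*t" "k mod 4 < 2 \<and> u = k \<and> v = k+1 \<or> 2 \<le> k mod 4 \<and> u = k+1 \<and> v = k"
    using h by auto
  define i where "i = k div 2 + 1"
  have i: "1 \<le> i" "i \<le> t" "2*(i-1) \<le> k" "k < 2*i" unfolding i_def using k by auto
  have "odd i \<longleftrightarrow> k mod 4 < 2" unfolding i_def using odd_div by simp
  then show "cover (replicate t 2) u v"
    unfolding cover_def rep_apart rep_fsize
    by (rule_tac exI[of _ k], rule_tac exI[of _ i]) (use i k in auto)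
qed

lemma rep_felems: "felems (replicate t 2) = {1..2*t-1}"
  unfolding felems_def rep_fsize ..

lemma chi2:
  assumes I: "I \<in> ideals (replicate t 2)"
  shows "chi (replicate t 2) q I = (if q \<in> I \<and> \<not> (1 \<le> q \<and> q + 2 \<le> 2*t \<and> q mod 4 < 2 \<and> q+1 \<in> I)
      \<and> \<not> (2 \<le> q \<and> q + 1 \<le> 2*t \<and> 2 \<le> (q-1) mod 4 \<and> q - 1 \<in> I) then 1 else 0)"
proof -
  have "(\<forall>v. cover (replicate t 2) q v \<longrightarrow> v \<notin> I) \<longleftrightarrow>
     \<not> (1 \<le> q \<and> q + 2 \<le> 2*t \<and> q mod 4 < 2 \<and> q+1 \<in> I)
      \<and> \<not> (2 \<le> q \<and> q + 1 \<le> 2*t \<and> 2 \<le> (q-1) mod 4 \<and> q - 1 \<in> I)"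
    unfolding cover2 by (cases q) auto
  then show ?thesis unfolding chi_iff[OF I] by simp
qed

lemma mu2:
  assumes I: "I \<in> ideals (replicate t 2)"
  shows "mu (replicate t 2) q I = (if 1 \<le> q \<and> q + 1 \<le> 2*t \<and> q \<notin> I
      \<and> \<not> (2 \<le> q \<and> q + 1 \<le> 2*t \<and> (q-1) mod 4 < 2 \<and> q - 1 \<notin> I)
      \<and> \<not> (1 \<le> q \<and> q + 2 \<le> 2*t \<and> 2 \<le> q mod 4 \<and> q+1 \<notin> I) then 1 else 0)"
proof -
  have "(\<forall>u. cover (replicate t 2) u q \<longrightarrow> u \<in> I) \<longleftrightarrow>
      \<not> (2 \<le> q \<and> q + 1 \<le> 2*t \<and> (q-1) mod 4 < 2 \<and> q - 1 \<notin> I)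
      \<and> \<not> (1 \<le> q \<and> q + 2 \<le> 2*t \<and> 2 \<le> q mod 4 \<and> q+1 \<notin> I)"
    unfolding cover2 by (cases q) auto
  moreover have "q \<in> felems (replicate t 2) \<longleftrightarrow> 1 \<le> q \<and> q + 1 \<le> 2*t"
    unfolding rep_felems by auto
  ultimately show ?thesis unfolding mu_iff[OF I] by simp
qed

lemma id1: "I \<in> ideals (replicate t 2) \<Longrightarrow> 1 \<le> q \<Longrightarrow> q + 2 \<le> 2*t \<Longrightarrow> q mod 4 < 2 \<Longrightarrow> q+1 \<in> I \<Longrightarrow> q \<in> I"
  using cover_ideal[of I "replicate t 2" q "q+1"] unfolding cover2 by auto

lemma id2: "I \<in> ideals (replicate t 2) \<Longrightarrow> 1 \<le> q \<Longrightarrow> q + 2 \<le> 2*t \<Longrightarrow> 2 \<le> q mod 4 \<Longrightarrow> q \<in> I \<Longrightarrow> q+1 \<in> I"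
  using cover_ideal[of I "replicate t 2" "q+1" q] unfolding cover2 by auto

lemma id3: "I \<in> ideals (replicate t 2) \<Longrightarrow> q \<in> I \<Longrightarrow> 1 \<le> q \<and> q + 1 \<le> 2*t"
proof -
  assume "I \<in> ideals (replicate t 2)" "q \<in> I"
  then have "q \<in> {1..2*t-1}" using ideal_sub[of I "replicate t 2"] unfolding rep_felems by auto
  then show ?thesis by auto
qed

definition cc :: "nat \<Rightarrow> real" where
  "cc q = (if odd q then -1/2 else if q mod 4 = 0 then -1 else 0)"

definition gg :: "nat \<Rightarrow> nat \<Rightarrow> nat set \<Rightarrow> real" where
  "gg t q I = chi (replicate t 2) q I - cc q * (mu (replicate t 2) q I - chi (replicate t 2) q I)"



definition U :: "nat \<Rightarrow> nat \<Rightarrow> bool" where "U t q \<longleftrightarrow> 1 \<le> q \<and> q + 2 \<le> 2*t \<and> q mod 4 < 2"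
definition D :: "nat \<Rightarrow> nat \<Rightarrow> bool" where "D t q \<longleftrightarrow> 1 \<le> q \<and> q + 2 \<le> 2*t \<and> 2 \<le> q mod 4"

lemma cover3: "cover (replicate t 2) u v \<longleftrightarrow> (U t u \<and> v = Suc u) \<or> (D t v \<and> u = Suc v)"
  unfolding cover2 U_def D_def by auto

lemma chi3:
  assumes I: "I \<in> ideals (replicate t 2)"
  shows "chi (replicate t 2) q I = (if q \<in> I \<and> \<not> (U t q \<and> Suc q \<in> I) \<and> \<not> (\<exists>p. q = Suc p \<and> D t p \<and> p \<in> I) then 1 else 0)"
  unfolding chi_iff[OF I] cover3 by (rule if_cong) auto

lemma mu3:
  assumes I: "I \<in> ideals (replicate t 2)"
  shows "mu (replicate t 2) q I = (if 1 \<le> q \<and> Suc q \<le> 2*t \<and> q \<notin> I \<and> \<not> (\<exists>p. q = Suc p \<and> U t p \<and> p \<notin> I) \<and> \<not> (D t q \<and> Suc q \<notin> I) then 1 else 0)"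
  unfolding mu_iff[OF I] cover3 rep_felems by (rule if_cong) auto

lemma idU: "I \<in> ideals (replicate t 2) \<Longrightarrow> U t q \<Longrightarrow> Suc q \<in> I \<Longrightarrow> q \<in> I"
  using cover_ideal[of I "replicate t 2" q "Suc q"] unfolding cover3 by auto

lemma idD: "I \<in> ideals (replicate t 2) \<Longrightarrow> D t q \<Longrightarrow> q \<in> I \<Longrightarrow> Suc q \<in> I"
  using cover_ideal[of I "replicate t 2" "Suc q" q] unfolding cover3 by auto

lemma loc1:
  assumes I: "I \<in> ideals (replicate t 2)" and q: "q mod 4 = 0" "q + 2 \<le> 2*t"
  shows "gg t (Suc q) I + gg t (Suc (Suc q)) I = 1/2 + (gg t (Suc (Suc q)) I - gg t q I) / 2"
proof -
  have f: "\<not> D t q" "U t (Suc q) \<longleftrightarrow> q + 3 \<le> 2*t" "\<not> D t (Suc q)" "\<not> U t (Suc (Suc q))"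
    "U t q \<longleftrightarrow> 1 \<le> q" "odd (Suc q)" "even q" "even (Suc (Suc q))" "Suc (Suc q) mod 4 \<noteq> 0"
    "\<And>p. q = Suc p \<Longrightarrow> \<not> U t p"
    using q unfolding U_def D_def by (presburger, presburger, presburger, presburger, presburger,
      presburger, presburger, presburger, presburger, presburger)
  have i3: "Suc (Suc q) \<in> I \<Longrightarrow> q + 3 \<le> 2*t" using id3[OF I, of "Suc (Suc q)"] by simp
  have g0: "gg t q I = (if 1 \<le> q \<and> q \<notin> I then 1 else 0)"
    unfolding gg_def cc_def chi3[OF I] mu3[OF I] using f q by auto
  have g1: "gg t (Suc q) I = ((if Suc q \<in> I \<and> \<not> (q+3 \<le> 2*t \<and> Suc (Suc q) \<in> I) then 1 else 0)
     + (if Suc q \<notin> I \<and> (1 \<le> q \<longrightarrow> q \<in> I) then 1 else 0)) / 2"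
    unfolding gg_def cc_def chi3[OF I] mu3[OF I] using f q by auto
  have g2: "gg t (Suc (Suc q)) I = (if Suc (Suc q) \<in> I then 1 else 0)"
    unfolding gg_def cc_def chi3[OF I] mu3[OF I] using f q by auto
  have a: "Suc q \<in> I \<Longrightarrow> 1 \<le> q \<Longrightarrow> q \<in> I" using idU[OF I, of q] f by auto
  have b: "Suc (Suc q) \<in> I \<Longrightarrow> Suc q \<in> I" using idU[OF I, of "Suc q"] i3 f by auto
  show ?thesis unfolding g0 g1 g2
    using a b i3 by (cases "Suc q \<in> I"; cases "Suc (Suc q) \<in> I"; cases "q \<in> I") auto
qed

lemma aux2:
  assumes "a \<Longrightarrow> b" "b \<Longrightarrow> E \<Longrightarrow> c"
  shows "((if b \<and> \<not> a then 1 else 0) + (if \<not> b \<and> (E \<longrightarrow> c) then 1 else 0)) / 2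
      + (if E \<and> \<not> c then 1 else 0) = 1/2 + ((if E \<and> \<not> c then 1 else 0) - (if a then 1 else 0)) / (2::real)"
  using assms by (cases a; cases b; cases c; cases E) auto

lemma loc2:
  assumes I: "I \<in> ideals (replicate t 2)" and q: "q mod 4 = 2" "q + 2 \<le> 2*t"
  shows "gg t (Suc q) I + gg t (Suc (Suc q)) I = 1/2 + (gg t (Suc (Suc q)) I - gg t q I) / 2"
proof -
  have f: "\<not> U t q" "D t q" "\<not> U t (Suc q)" "D t (Suc q) \<longleftrightarrow> q + 3 \<le> 2*t" "\<not> D t (Suc (Suc q))"
    "U t (Suc (Suc q)) \<longleftrightarrow> q + 4 \<le> 2*t" "odd (Suc q)" "even q" "even (Suc (Suc q))"
    "Suc (Suc q) mod 4 = 0" "\<And>p. q = Suc p \<Longrightarrow> \<not> D t p" "q \<noteq> 0"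
    using q unfolding U_def D_def by (presburger, presburger, presburger, presburger, presburger,
      presburger, presburger, presburger, presburger, presburger, presburger, presburger)
  have g0: "gg t q I = (if q \<in> I then 1 else 0)"
    unfolding gg_def cc_def chi3[OF I] mu3[OF I] using f q by auto
  have g1: "gg t (Suc q) I = ((if Suc q \<in> I \<and> q \<notin> I then 1 else 0)
     + (if Suc q \<notin> I \<and> (q+3 \<le> 2*t \<longrightarrow> Suc (Suc q) \<in> I) then 1 else 0)) / 2"
    unfolding gg_def cc_def chi3[OF I] mu3[OF I] using f q by auto
  have g2: "gg t (Suc (Suc q)) I = (if q+3 \<le> 2*t \<and> Suc (Suc q) \<notin> I then 1 else 0)"
    unfolding gg_def cc_def chi3[OF I] mu3[OF I] using f q by auto
  have a: "q \<in> I \<Longrightarrow> Suc q \<in> I" using idD[OF I, of q] f by auto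
  have b: "Suc q \<in> I \<Longrightarrow> q+3 \<le> 2*t \<Longrightarrow> Suc (Suc q) \<in> I" using idD[OF I, of "Suc q"] f by auto
  show ?thesis unfolding g0 g1 g2 by (rule aux2[OF a b])
qed

lemma gg_out:
  assumes I: "I \<in> ideals (replicate t 2)" and q: "q = 0 \<or> q = 2*t"
  shows "gg t q I = 0"
proof -
  have "q \<notin> I" using id3[OF I, of q] q by auto
  then show ?thesis unfolding gg_def chi3[OF I] mu3[OF I] using q by auto
qed

lemma loc:
  assumes I: "I \<in> ideals (replicate t 2)" and k: "1 \<le> k" "k \<le> t"
  shows "gg t (2*k-1) I + gg t (2*k) I = 1/2 + (gg t (2*k) I - gg t (2*(k-1)) I) / 2"
proof -
  obtain k' where k': "k = Suc k'" using k(1) by (cases k) auto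
  obtain q where q: "q = 2*(k-1)" by blast
  have q': "q = 2*k'" using q k' by simp
  have e1: "2*k-1 = Suc q" using k q by linarith
  have e2: "2*k = Suc (Suc q)" using k q by linarith
  have e3: "q + 2 \<le> 2*t" using k q by linarith
  have m: "q mod 4 = 0 \<or> q mod 4 = 2" unfolding q' by presburger
  have "gg t (Suc q) I + gg t (Suc (Suc q)) I = 1/2 + (gg t (Suc (Suc q)) I - gg t q I) / 2"
  proof (cases "q mod 4 = 0")
    case True then show ?thesis by (rule loc1[OF I _ e3])
  next
    case False then have "q mod 4 = 2" using m by simp
    then show ?thesis by (rule loc2[OF I _ e3])
  qed
  moreover have h1: "gg t (2*k-1) I = gg t (Suc q) I" by (simp only: e1)
  moreover have h2: "gg t (2*k) I = gg t (Suc (Suc q)) I" by (simp only: e2)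
  moreover have h3: "gg t (2*(k-1)) I = gg t q I" by (simp only: q)
  ultimately show ?thesis by (simp only: h1 h2 h3)
qed

lemma part2_rep:
  assumes I: "I \<in> ideals (replicate t 2)"
  shows "(\<Sum>q\<in>felems (replicate t 2). chi (replicate t 2) q I) - real t / 2
     = (\<Sum>q\<in>felems (replicate t 2). cc q * toggle (replicate t 2) q I)"
proof -
  let ?R = "replicate t 2"
  have "(\<Sum>q\<in>{1..2*t-1}. gg t q I) = (\<Sum>q\<in>{1..2*t}. gg t q I)"
  proof (cases t)
    case 0 then show ?thesis by simp
  next
    case (Suc t')
    then have "{1..2*t} = insert (2*t) {1..2*t-1}" by auto
    moreover have "2*t \<notin> {1..2*t-1}" using Suc by auto
    ultimately show ?thesis using gg_out[OF I, of "2*t"] by simp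
  qed
  also have "\<dots> = (\<Sum>k\<in>{1..t}. gg t (2*k-1) I + gg t (2*k) I)" by (rule sum_pairs)
  also have "\<dots> = (\<Sum>k\<in>{1..t}. 1/2 + (gg t (2*k) I - gg t (2*(k-1)) I) / 2)"
    by (rule sum.cong[OF refl], rule loc[OF I]) auto
  also have "\<dots> = real t / 2 + (\<Sum>k\<in>{1..t}. gg t (2*k) I - gg t (2*(k-1)) I) / 2"
    by (simp add: sum.distrib sum_divide_distrib)
  also have "(\<Sum>k\<in>{1..t}. gg t (2*k) I - gg t (2*(k-1)) I) = gg t (2*t) I - gg t (2*0) I"
    by (rule sum_tele[where h="\<lambda>k. gg t (2*k) I"])
  also have "\<dots> = 0" using gg_out[OF I, of 0] gg_out[OF I, of "2*t"] by simp
  finally have S: "(\<Sum>q\<in>{1..2*t-1}. gg t q I) = real t / 2" by simp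
  have "(\<Sum>q\<in>{1..2*t-1}. gg t q I) = (\<Sum>q\<in>{1..2*t-1}. chi ?R q I) - (\<Sum>q\<in>{1..2*t-1}. cc q * toggle ?R q I)"
    unfolding gg_def toggle_eq by (simp add: sum_subtractf)
  then show ?thesis using S unfolding rep_felems by linarith
qed


theorem corollary3p2:
  fixes alpha :: "nat list"
  assumes "fence_ok alpha"
  shows "(\<forall>i\<in>{1..length alpha}. \<forall>x\<in>bsegment alpha i. \<forall>y\<in>bsegment alpha i.
            tequiv alpha (\<lambda>I. chi alpha x I - chi alpha y I) (\<lambda>_. 0))
       \<and> ((\<forall>k\<in>set alpha. k = 2) \<longrightarrow>
            tequiv alpha (\<lambda>I. \<Sum>q\<in>felems alpha. chi alpha q I)
                         (\<lambda>_. real (length alpha) / 2))"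
proof (intro conjI ballI impI)
  fix i x y assume "i \<in> {1..length alpha}" "x \<in> bsegment alpha i" "y \<in> bsegment alpha i"
  then show "tequiv alpha (\<lambda>I. chi alpha x I - chi alpha y I) (\<lambda>_. 0)"
    using part1[OF assms, of i x y] by auto
next
  assume all2: "\<forall>k\<in>set alpha. k = 2"
  define t where "t = length alpha"
  have R: "alpha = replicate t 2" unfolding t_def by (rule replicate_eqI) (use all2 in auto)
  show "tequiv alpha (\<lambda>I. \<Sum>q\<in>felems alpha. chi alpha q I) (\<lambda>_. real (length alpha) / 2)"
    unfolding tequiv_def
  proof (rule exI[of _ cc], intro ballI)
    fix I assume "I \<in> ideals alpha"
    then have I: "I \<in> ideals (replicate t 2)" using R by simp
    show "(\<Sum>q\<in>felems alpha. chi alpha q I) - real (length alpha) / 2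
        = (\<Sum>q\<in>felems alpha. cc q * toggle alpha q I)"
      using part2_rep[OF I] R unfolding t_def[symmetric] by simp
  qed
qed

end
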